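(* Let $K$ be a field, $f\colon R\to S$ a morphism of Zinbiel algebras, $N$ a positive integer, and $\Theta_t=\sum_{i=0}^N\theta_it^i$ a deformation of order $N$ of $f$. Then the obstruction class $\mathrm{Ob}_\Theta=(\mathrm{Ob}_R;\mathrm{Ob}_S;\mathrm{Ob}_f)\in C^3_{\mathrm{Zinb}}(f,f)$ is a $3$-cocycle, i.e. $d^3_f\,\mathrm{Ob}_\Theta=0$.
   Context: A Zinbiel algebra over $K$ is a $K$-vector space $R$ with bilinear product $x\cdot y$ (also written $m_R(x,y)$) satisfying $(x\cdot y)\cdot z=x\cdot(y\cdot z)+x\cdot(z\cdot y)$. A morphism $f\colon R\to S$ is a linear map with $f(x\cdot y)=f(x)\cdot f(y)$. $R$ is a bimodule over itself, $S$ over itself, and $S$ is an $R$-bimodule via $r\cdot s=f(r)\cdot s$, $s\cdot r=s\cdot f(r)$. For a bimodule $A$ over $R$ and $1\le n\le4$, $C^n_{\mathrm{Zinb}}(R,A)=\mathrm{Hom}_K(R^{\otimes n},A)$ with $(d^1\varphi)(x,y)=x\cdot\varphi(y)-\varphi(x\cdot y)+\varphi(x)\cdot y$, $(d^2\varphi)(x,y,z)=x\cdot(\varphi(y,z)+\varphi(z,y))-\varphi(x\cdot y,z)+\varphi(x,y\cdot z+z\cdot y)-\varphi(x,y)\cdot z$, $(d^3\varphi)(x,y,z,w)=x\cdot\{\varphi(y,z,w)-\varphi(z,w,y)+\varphi(z,y,w)-\varphi(w,z,y)\}-\varphi(x\cdot y,z,w)+\varphi(x,y\cdot z+z\cdot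 y,w)-\varphi(x,y,z\cdot w+w\cdot z)+\varphi(x,y,z)\cdot w$. The deformation complex: $C^0_{\mathrm{Zinb}}(R,S)=0$, $d^0=0$, $C^n_{\mathrm{Zinb}}(f,f)=C^n_{\mathrm{Zinb}}(R,R)\times C^n_{\mathrm{Zinb}}(S,S)\times C^{n-1}_{\mathrm{Zinb}}(R,S)$ ($1\le n\le4$), $d^i_f(\xi;\pi;\varphi)=(d^i\xi;d^i\pi;f\xi-\pi f-d^{i-1}\varphi)$ with $(f\xi)(x_1,\dots)=f(\xi(x_1,\dots))$, $(\pi f)(x_1,\dots)=\pi(f(x_1),\dots)$. A deformation of order $N$ of $f$ is $\Theta_t=\sum_{i=0}^N\theta_it^i$ with $\theta_0=(m_R;m_S;f)$ (so $m_{R,0}=m_R$, $m_{S,0}=m_S$, $f_0=f$) and $\theta_i=(m_{R,i};m_{S,i};f_i)\in C^2_{\mathrm{Zinb}}(f,f)$, such that for all $0\le n\le N$: for $*=R,S$ and all $x,y,z\in *$, $\sum_{l=0}^n m_{*,l}(m_{*,n-l}(x,y),z)=\sum_{l=0}^n m_{*,l}(x,m_{*,n-l}(y,z)+m_{*,n-l}(z,y))$; and for all $x,y\in R$, $\sum_{i=0}^n f_i(m_{R,n-i}(x,y))=\sum_{i+j+k=n}m_{S,i}(f_j(x),f_k(y))$ (indices $\ge0$). The obstruction class of such $\Theta_t$ is $\mathrm{Ob}_\Theta=(\mathrm{Ob}_R;\mathrm{Ob}_S;\mathrm{Ob}_f)$ where, for $*=R,S$ and $x,y,z\in *$, $\mathrm{Ob}_*(x,y,z)=\sum_{i=1}^N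 m_{*,i}(m_{*,N+1-i}(x,y),z)-\sum_{i=1}^N m_{*,i}(x,m_{*,N+1-i}(y,z)+m_{*,N+1-i}(z,y))$, and for $x,y\in R$, $\mathrm{Ob}_f(x,y)=\sum' m_{S,i}(f_j(x),f_k(y))-\sum_{i=1}^N f_i(m_{R,N+1-i}(x,y))$, where $\sum'$ runs over all triples of integers $i,j,k\ge0$ with $i+j+k=N+1$ and at least two of $i,j,k$ positive (equivalently, $i,j,k\le N$). *)

theory Defs
  imports Complex_Main
begin

definition bilin :: "('k::field \<Rightarrow> 'v::ab_group_add \<Rightarrow> 'v) \<Rightarrow> ('k \<Rightarrow> 'w::ab_group_add \<Rightarrow> 'w)
    \<Rightarrow> ('v \<Rightarrow> 'v \<Rightarrow> 'w) \<Rightarrow> bool" where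
  "bilin sV sW m \<longleftrightarrow> (\<forall>x. Vector_Spaces.linear sV sW (m x)) \<and> (\<forall>y. Vector_Spaces.linear sV sW (\<lambda>x. m x y))"

definition zinbiel_identity :: "('v::ab_group_add \<Rightarrow> 'v \<Rightarrow> 'v) \<Rightarrow> bool" where
  "zinbiel_identity m \<longleftrightarrow> (\<forall>x y z. m (m x y) z = m x (m y z) + m x (m z y))"

definition zinbiel_algebra :: "('k::field \<Rightarrow> 'v::ab_group_add \<Rightarrow> 'v) \<Rightarrow> ('v \<Rightarrow> 'v \<Rightarrow> 'v) \<Rightarrow> bool" where
  "zinbiel_algebra s m \<longleftrightarrow> vector_space s \<and> bilin s s m \<and> zinbiel_identity m"

definition zinbiel_morphism :: "('k::field \<Rightarrow> 'r::ab_group_add \<Rightarrow> 'r) \<Rightarrow> ('r \<Rightarrow> 'r \<Rightarrow> 'r)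
    \<Rightarrow> ('k \<Rightarrow> 's::ab_group_add \<Rightarrow> 's) \<Rightarrow> ('s \<Rightarrow> 's \<Rightarrow> 's) \<Rightarrow> ('r \<Rightarrow> 's) \<Rightarrow> bool" where
  "zinbiel_morphism sR mR sS mS f \<longleftrightarrow>
     zinbiel_algebra sR mR \<and> zinbiel_algebra sS mS \<and> Vector_Spaces.linear sR sS f \<and>
     (\<forall>x y. f (mR x y) = mS (f x) (f y))"

(* Coboundaries d^2, d^3 of C^*_Zinb(R, A), for a bimodule A over R given by the
   product mu of R, the left action lft and the right action rgt. *)
definition zd2 :: "('r::ab_group_add \<Rightarrow> 'r \<Rightarrow> 'r) \<Rightarrow> ('r \<Rightarrow> 'a \<Rightarrow> 'a) \<Rightarrow> ('a \<Rightarrow> 'r \<Rightarrow> 'a)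
    \<Rightarrow> ('r \<Rightarrow> 'r \<Rightarrow> 'a::ab_group_add) \<Rightarrow> 'r \<Rightarrow> 'r \<Rightarrow> 'r \<Rightarrow> 'a" where
  "zd2 mu lft rgt \<phi> x y z =
     lft x (\<phi> y z + \<phi> z y) - \<phi> (mu x y) z + \<phi> x (mu y z + mu z y) - rgt (\<phi> x y) z"

definition zd3 :: "('r::ab_group_add \<Rightarrow> 'r \<Rightarrow> 'r) \<Rightarrow> ('r \<Rightarrow> 'a \<Rightarrow> 'a) \<Rightarrow> ('a \<Rightarrow> 'r \<Rightarrow> 'a)
    \<Rightarrow> ('r \<Rightarrow> 'r \<Rightarrow> 'r \<Rightarrow> 'a::ab_group_add) \<Rightarrow> 'r \<Rightarrow> 'r \<Rightarrow> 'r \<Rightarrow> 'r \<Rightarrow> 'a" where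
  "zd3 mu lft rgt \<phi> x y z w =
     lft x (\<phi> y z w - \<phi> z w y + \<phi> z y w - \<phi> w z y) - \<phi> (mu x y) z w
     + \<phi> x (mu y z + mu z y) w - \<phi> x y (mu z w + mu w z) + rgt (\<phi> x y z) w"

definition zd3_f :: "('r::ab_group_add \<Rightarrow> 'r \<Rightarrow> 'r) \<Rightarrow> ('s::ab_group_add \<Rightarrow> 's \<Rightarrow> 's) \<Rightarrow> ('r \<Rightarrow> 's)
    \<Rightarrow> ('r \<Rightarrow> 'r \<Rightarrow> 'r \<Rightarrow> 'r) \<times> ('s \<Rightarrow> 's \<Rightarrow> 's \<Rightarrow> 's) \<times> ('r \<Rightarrow> 'r \<Rightarrow> 's)
    \<Rightarrow> ('r \<Rightarrow> 'r \<Rightarrow> 'r \<Rightarrow> 'r \<Rightarrow> 'r) \<times> ('s \<Rightarrow> 's \<Rightarrow> 's \<Rightarrow> 's \<Rightarrow> 's) \<times> ('r \<Rightarrow> 'r \<Rightarrow> 'r \<Rightarrow> 's)" where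
  "zd3_f mR mS f c = (case c of (\<xi>, \<pi>, \<phi>) \<Rightarrow>
     (zd3 mR mR mR \<xi>,
      zd3 mS mS mS \<pi>,
      (\<lambda>x y z. f (\<xi> x y z) - \<pi> (f x) (f y) (f z)
                - zd2 mR (\<lambda>r s. mS (f r) s) (\<lambda>s r. mS s (f r)) \<phi> x y z)))"

(* Deformation of order N of f : (R, mR 0) -> (S, mS 0), with theta_i = (mR i; mS i; fs i) *)
definition zinbiel_deformation :: "('k::field \<Rightarrow> 'r::ab_group_add \<Rightarrow> 'r) \<Rightarrow> ('k \<Rightarrow> 's::ab_group_add \<Rightarrow> 's)
    \<Rightarrow> nat \<Rightarrow> (nat \<Rightarrow> 'r \<Rightarrow> 'r \<Rightarrow> 'r) \<Rightarrow> (nat \<Rightarrow> 's \<Rightarrow> 's \<Rightarrow> 's) \<Rightarrow> (nat \<Rightarrow> 'r \<Rightarrow> 's) \<Rightarrow> bool" where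
  "zinbiel_deformation sR sS N mR mS fs \<longleftrightarrow>
     (\<forall>i\<le>N. bilin sR sR (mR i) \<and> bilin sS sS (mS i) \<and> Vector_Spaces.linear sR sS (fs i)) \<and>
     (\<forall>n\<le>N.
        (\<forall>x y z. (\<Sum>l=0..n. mR l (mR (n-l) x y) z) = (\<Sum>l=0..n. mR l x (mR (n-l) y z + mR (n-l) z y))) \<and>
        (\<forall>x y z. (\<Sum>l=0..n. mS l (mS (n-l) x y) z) = (\<Sum>l=0..n. mS l x (mS (n-l) y z + mS (n-l) z y))) \<and>
        (\<forall>x y. (\<Sum>i=0..n. fs i (mR (n-i) x y)) =
               (\<Sum>(i,j,k)\<in>{(i,j,k). i + j + k = n}. mS i (fs j x) (fs k y))))"

definition Ob_alg :: "nat \<Rightarrow> (nat \<Rightarrow> 'v \<Rightarrow> 'v \<Rightarrow> 'v::ab_group_add) \<Rightarrow> 'v \<Rightarrow> 'v \<Rightarrow> 'v \<Rightarrow> 'v" where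
  "Ob_alg N m x y z =
     (\<Sum>i=1..N. m i (m (N+1-i) x y) z) - (\<Sum>i=1..N. m i x (m (N+1-i) y z + m (N+1-i) z y))"

definition Ob_mor :: "nat \<Rightarrow> (nat \<Rightarrow> 'r::ab_group_add \<Rightarrow> 'r \<Rightarrow> 'r) \<Rightarrow> (nat \<Rightarrow> 's \<Rightarrow> 's \<Rightarrow> 's::ab_group_add)
    \<Rightarrow> (nat \<Rightarrow> 'r \<Rightarrow> 's) \<Rightarrow> 'r \<Rightarrow> 'r \<Rightarrow> 's" where
  "Ob_mor N mR mS fs x y =
     (\<Sum>(i,j,k)\<in>{(i,j,k). i + j + k = N + 1 \<and> i \<le> N \<and> j \<le> N \<and> k \<le> N}. mS i (fs j x) (fs k y))
     - (\<Sum>i=1..N. fs i (mR (N+1-i) x y))"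

definition Ob :: "nat \<Rightarrow> (nat \<Rightarrow> 'r \<Rightarrow> 'r \<Rightarrow> 'r::ab_group_add) \<Rightarrow> (nat \<Rightarrow> 's \<Rightarrow> 's \<Rightarrow> 's::ab_group_add)
    \<Rightarrow> (nat \<Rightarrow> 'r \<Rightarrow> 's) \<Rightarrow> ('r \<Rightarrow> 'r \<Rightarrow> 'r \<Rightarrow> 'r) \<times> ('s \<Rightarrow> 's \<Rightarrow> 's \<Rightarrow> 's) \<times> ('r \<Rightarrow> 'r \<Rightarrow> 's)" where
  "Ob N mR mS fs = (Ob_alg N mR, Ob_alg N mS, Ob_mor N mR mS fs)"

end

theory Submission
  imports Defs "HOL-Library.Function_Algebras"
begin


definition addl :: "('a::ab_group_add \<Rightarrow> 'b::ab_group_add) \<Rightarrow> bool" where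
  "addl g \<longleftrightarrow> (\<forall>x y. g (x + y) = g x + g y)"

lemma addl_0: "addl g \<Longrightarrow> g 0 = 0"
  unfolding addl_def by (metis add_cancel_right_right add_0)

lemma addl_add: "addl g \<Longrightarrow> g (x + y) = g x + g y"
  unfolding addl_def by blast

lemma addl_neg: assumes "addl g" shows "g (- x) = - g x"
proof -
  have "g (- x) + g x = 0" using addl_add[OF assms, of "- x" x] addl_0[OF assms] by simp
  then show ?thesis by (simp add: add_eq_0_iff)
qed

lemma addl_diff: assumes "addl g" shows "g (x - y) = g x - g y"
  using addl_add[OF assms, of x "- y"] addl_neg[OF assms, of y] by simp

lemma addl_sum: "addl g \<Longrightarrow> g (sum h A) = (\<Sum>a\<in>A. g (h a))"
proof (induction A rule: infinite_finite_induct)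
  case (infinite A) then show ?case by (simp add: addl_0)
next
  case empty then show ?case by (simp add: addl_0)
next
  case (insert x F) then show ?case by (simp add: addl_add)
qed

lemma linear_addl: "Vector_Spaces.linear s1 s2 f \<Longrightarrow> addl f"
  by (simp add: addl_def Vector_Spaces.linear_def module_hom_def module_hom_axioms_def)

definition biadd :: "(nat \<Rightarrow> 'a::ab_group_add \<Rightarrow> 'b::ab_group_add \<Rightarrow> 'c::ab_group_add) \<Rightarrow> bool" where
  "biadd m \<longleftrightarrow> (\<forall>a x. addl (m a x)) \<and> (\<forall>a y. addl (\<lambda>x. m a x y))"

definition fadd :: "(nat \<Rightarrow> 'a::ab_group_add \<Rightarrow> 'b::ab_group_add) \<Rightarrow> bool" where
  "fadd f \<longleftrightarrow> (\<forall>a. addl (f a))"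

definition S3 :: "nat \<Rightarrow> (nat \<times> nat \<times> nat) set" where
  "S3 n = {(a,b,c). a + b + c = n}"

lemma S3_finite: "finite (S3 n)"
proof -
  have "S3 n \<subseteq> {..n} \<times> {..n} \<times> {..n}" unfolding S3_def by auto
  then show ?thesis by (rule finite_subset) auto
qed

definition Mop :: "(nat \<Rightarrow> 'a \<Rightarrow> 'b \<Rightarrow> 'c::comm_monoid_add) \<Rightarrow> (nat \<Rightarrow> 'a) \<Rightarrow> (nat \<Rightarrow> 'b) \<Rightarrow> nat \<Rightarrow> 'c" where
  "Mop m X Y n = (\<Sum>(a,b,c)\<in>S3 n. m a (X b) (Y c))"

definition Fop :: "(nat \<Rightarrow> 'a \<Rightarrow> 'b::comm_monoid_add) \<Rightarrow> (nat \<Rightarrow> 'a) \<Rightarrow> nat \<Rightarrow> 'b" where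
  "Fop f X n = (\<Sum>l=0..n. f l (X (n - l)))"

fun sh :: "(nat \<Rightarrow> 'a::zero) \<Rightarrow> nat \<Rightarrow> 'a" where
  "sh X 0 = 0" | "sh X (Suc n) = X n"

definition cst :: "'a::zero \<Rightarrow> nat \<Rightarrow> 'a" where
  "cst u n = (if n = 0 then u else 0)"

lemma biadd_1: "biadd m \<Longrightarrow> addl (\<lambda>x. m a x y)" unfolding biadd_def by blast
lemma biadd_2: "biadd m \<Longrightarrow> addl (m a x)" unfolding biadd_def by blast

lemma Mop_addl1: assumes "biadd m" shows "addl (\<lambda>X. Mop m X Y)"
  unfolding addl_def Mop_def fun_eq_iff plus_fun_apply
  using addl_add[OF biadd_1[OF assms]]
  by (simp add: sum.distrib split_def)

lemma Mop_addl2: assumes "biadd m" shows "addl (Mop m X)"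
  unfolding addl_def Mop_def fun_eq_iff plus_fun_apply
  using addl_add[OF biadd_2[OF assms]]
  by (simp add: sum.distrib split_def)

lemma Fop_addl: assumes "fadd f" shows "addl (Fop f)"
  unfolding addl_def Fop_def fun_eq_iff plus_fun_apply
  using assms by (simp add: sum.distrib fadd_def addl_add)

lemma sh_addl: "addl (sh :: (nat \<Rightarrow> 'a::ab_group_add) \<Rightarrow> _)"
  unfolding addl_def
proof (intro allI ext)
  fix x y :: "nat \<Rightarrow> 'a" and n show "sh (x + y) n = (sh x + sh y) n"
    by (cases n) (simp_all add: plus_fun_apply)
qed


lemma S3_shift_b:
  assumes "\<And>a c. g a 0 c = 0"
  shows "(\<Sum>(a,b,c)\<in>S3 (Suc k). g a b c) = (\<Sum>(a,b,c)\<in>S3 k. g a (Suc b) c)"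
proof -
  have "(\<Sum>(a,b,c)\<in>S3 (Suc k). g a b c) = (\<Sum>(a,b,c)\<in>{(a,b,c). a+b+c = Suc k \<and> b \<noteq> 0}. g a b c)"
    using assms by (intro sum.mono_neutral_right) (auto simp: S3_finite[unfolded S3_def] S3_def, ((metis gr0I)+)?)
  also have "\<dots> = (\<Sum>(a,b,c)\<in>S3 k. g a (Suc b) c)"
    by (rule sum.reindex_bij_witness[where i="\<lambda>(a,b,c). (a, Suc b, c)" and j="\<lambda>(a,b,c). (a, b - 1, c)"])
      (auto simp: S3_def)
  finally show ?thesis .
qed

lemma S3_shift_c:
  assumes "\<And>a b. g a b 0 = 0"
  shows "(\<Sum>(a,b,c)\<in>S3 (Suc k). g a b c) = (\<Sum>(a,b,c)\<in>S3 k. g a b (Suc c))"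
proof -
  have "(\<Sum>(a,b,c)\<in>S3 (Suc k). g a b c) = (\<Sum>(a,b,c)\<in>{(a,b,c). a+b+c = Suc k \<and> c \<noteq> 0}. g a b c)"
    using assms by (intro sum.mono_neutral_right) (auto simp: S3_finite[unfolded S3_def] S3_def, ((metis gr0I)+)?)
  also have "\<dots> = (\<Sum>(a,b,c)\<in>S3 k. g a b (Suc c))"
    by (rule sum.reindex_bij_witness[where i="\<lambda>(a,b,c). (a, b, Suc c)" and j="\<lambda>(a,b,c). (a, b, c - 1)"])
      (auto simp: S3_def)
  finally show ?thesis .
qed

lemma S3_single:
  assumes "\<And>a b c. a + b + c = q \<Longrightarrow> (a,b,c) \<noteq> (a0,b0,c0) \<Longrightarrow> g a b c = 0"
    and "a0 + b0 + c0 = q"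
  shows "(\<Sum>(a,b,c)\<in>S3 q. g a b c) = g a0 b0 c0"
proof -
  have "(\<Sum>(a,b,c)\<in>S3 q. g a b c) = (\<Sum>(a,b,c)\<in>{(a0,b0,c0)}. g a b c)"
    using assms(2) by (intro sum.mono_neutral_right) (auto simp: S3_finite[unfolded S3_def] S3_def intro: assms(1))
  then show ?thesis by simp
qed

lemma S3_c0:
  assumes "\<And>a b c. c \<noteq> 0 \<Longrightarrow> g a b c = 0"
  shows "(\<Sum>(a,b,c)\<in>S3 q. g a b c) = (\<Sum>l=0..q. g l (q - l) 0)"
proof -
  have "(\<Sum>(a,b,c)\<in>S3 q. g a b c) = (\<Sum>(a,b,c)\<in>{(a,b,c). a+b+c = q \<and> c = 0}. g a b c)"
    using assms by (intro sum.mono_neutral_right) (auto simp: S3_finite[unfolded S3_def] S3_def, ((metis gr0I)+)?)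
  also have "\<dots> = (\<Sum>l=0..q. g l (q - l) 0)"
    by (rule sum.reindex_bij_witness[where i="\<lambda>l. (l, q - l, 0)" and j="\<lambda>(a,b,c). a"])
      auto
  finally show ?thesis .
qed

lemma S3_b0:
  assumes "\<And>a b c. b \<noteq> 0 \<Longrightarrow> g a b c = 0"
  shows "(\<Sum>(a,b,c)\<in>S3 q. g a b c) = (\<Sum>l=0..q. g l 0 (q - l))"
proof -
  have "(\<Sum>(a,b,c)\<in>S3 q. g a b c) = (\<Sum>(a,b,c)\<in>{(a,b,c). a+b+c = q \<and> b = 0}. g a b c)"
    using assms by (intro sum.mono_neutral_right) (auto simp: S3_finite[unfolded S3_def] S3_def, ((metis gr0I)+)?)
  also have "\<dots> = (\<Sum>l=0..q. g l 0 (q - l))"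
    by (rule sum.reindex_bij_witness[where i="\<lambda>l. (l, 0, q - l)" and j="\<lambda>(a,b,c). a"])
      auto
  finally show ?thesis .
qed

lemma biadd_z1: "biadd m \<Longrightarrow> m a 0 y = 0"
  using addl_0[OF biadd_1] by metis
lemma biadd_z2: "biadd m \<Longrightarrow> m a x 0 = 0"
  using addl_0[OF biadd_2] by metis

lemma Mop_0: "Mop m X Y 0 = m 0 (X 0) (Y 0)"
  unfolding Mop_def using S3_single[of 0 0 0 0 "\<lambda>a b c. m a (X b) (Y c)"] by simp

lemma Mop_sh1: assumes "biadd m" shows "Mop m (sh X) Y = sh (Mop m X Y)"
proof (rule ext)
  fix n show "Mop m (sh X) Y n = sh (Mop m X Y) n"
  proof (cases n)
    case 0 then show ?thesis by (simp add: Mop_0 biadd_z1[OF assms])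
  next
    case (Suc k)
    then show ?thesis unfolding Mop_def
      using S3_shift_b[of "\<lambda>a b c. m a (sh X b) (Y c)" k] by (simp add: biadd_z1[OF assms])
  qed
qed

lemma Mop_sh2: assumes "biadd m" shows "Mop m X (sh Y) = sh (Mop m X Y)"
proof (rule ext)
  fix n show "Mop m X (sh Y) n = sh (Mop m X Y) n"
  proof (cases n)
    case 0 then show ?thesis by (simp add: Mop_0 biadd_z2[OF assms])
  next
    case (Suc k)
    then show ?thesis unfolding Mop_def
      using S3_shift_c[of "\<lambda>a b c. m a (X b) (sh Y c)" k] by (simp add: biadd_z2[OF assms])
  qed
qed

lemma Mop_cst_cst: assumes "biadd m" shows "Mop m (cst u) (cst v) = (\<lambda>q. m q u v)"
proof (rule ext)
  fix q show "Mop m (cst u) (cst v) q = m q u v"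
    unfolding Mop_def using S3_single[of q q 0 0 "\<lambda>a b c. m a (cst u b) (cst v c)"]
    by (auto simp: cst_def biadd_z1[OF assms] biadd_z2[OF assms])
qed

lemma Mop_cstR: assumes "biadd m" shows "Mop m X (cst v) q = (\<Sum>l=0..q. m l (X (q - l)) v)"
  unfolding Mop_def using S3_c0[of "\<lambda>a b c. m a (X b) (cst v c)" q]
  by (auto simp: cst_def biadd_z2[OF assms])

lemma Mop_cstL: assumes "biadd m" shows "Mop m (cst u) Y q = (\<Sum>l=0..q. m l u (Y (q - l)))"
  unfolding Mop_def using S3_b0[of "\<lambda>a b c. m a (cst u b) (Y c)" q]
  by (auto simp: cst_def biadd_z1[OF assms])

lemma Mop_lowR: assumes "biadd m" and "\<And>q. q \<le> N \<Longrightarrow> W q = 0"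
  shows "Mop m X W (Suc N) = m 0 (X 0) (W (Suc N))"
proof -
  have "\<And>a b c. a + b + c = Suc N \<Longrightarrow> (a,b,c) \<noteq> (0,0,Suc N) \<Longrightarrow> m a (X b) (W c) = 0"
  proof -
    fix a b c assume h: "a + b + c = Suc N" "(a,b,c) \<noteq> (0,0,Suc N)"
    then have "c \<le> N" by auto
    then show "m a (X b) (W c) = 0" by (simp add: assms(2) biadd_z2[OF assms(1)])
  qed
  then show ?thesis unfolding Mop_def using S3_single[of "Suc N" 0 0 "Suc N" "\<lambda>a b c. m a (X b) (W c)"]
    by simp
qed

lemma Mop_lowL: assumes "biadd m" and "\<And>q. q \<le> N \<Longrightarrow> W q = 0"
  shows "Mop m W Y (Suc N) = m 0 (W (Suc N)) (Y 0)"
proof -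
  have "\<And>a b c. a + b + c = Suc N \<Longrightarrow> (a,b,c) \<noteq> (0,Suc N,0) \<Longrightarrow> m a (W b) (Y c) = 0"
  proof -
    fix a b c assume h: "a + b + c = Suc N" "(a,b,c) \<noteq> (0,Suc N,0)"
    then have "b \<le> N" by auto
    then show "m a (W b) (Y c) = 0" by (simp add: assms(2) biadd_z1[OF assms(1)])
  qed
  then show ?thesis unfolding Mop_def using S3_single[of "Suc N" 0 "Suc N" 0 "\<lambda>a b c. m a (W b) (Y c)"]
    by simp
qed

lemma fadd_z: "fadd f \<Longrightarrow> f a 0 = 0"
  unfolding fadd_def using addl_0 by metis

lemma Fop_0: "Fop f X 0 = f 0 (X 0)"
  unfolding Fop_def by simp

lemma Fop_sh: assumes "fadd f" shows "Fop f (sh X) = sh (Fop f X)"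
proof (rule ext)
  fix n show "Fop f (sh X) n = sh (Fop f X) n"
  proof (cases n)
    case 0 then show ?thesis by (simp add: Fop_0 fadd_z[OF assms])
  next
    case (Suc k)
    have "Fop f (sh X) (Suc k) = (\<Sum>l=0..k. f l (sh X (Suc k - l))) + f (Suc k) (sh X 0)"
      unfolding Fop_def by (simp add: sum.atLeast0_atMost_Suc)
    also have "\<dots> = (\<Sum>l=0..k. f l (X (k - l)))"
      by (auto simp: fadd_z[OF assms] Suc_diff_le intro!: sum.cong)
    finally show ?thesis using Suc by (simp add: Fop_def)
  qed
qed

lemma Fop_cst: assumes "fadd f" shows "Fop f (cst u) = (\<lambda>q. f q u)"
proof (rule ext)
  fix q
  have "Fop f (cst u) q = (\<Sum>l=0..q. if l = q then f l u else 0)"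
    unfolding Fop_def by (rule sum.cong) (auto simp: cst_def fadd_z[OF assms])
  then show "Fop f (cst u) q = f q u" by simp
qed

lemma Fop_low: assumes "fadd f" and "\<And>q. q \<le> N \<Longrightarrow> W q = 0"
  shows "Fop f W (Suc N) = f 0 (W (Suc N))"
proof -
  have "Fop f W (Suc N) = (\<Sum>l=0..Suc N. if l = 0 then f 0 (W (Suc N)) else 0)"
    unfolding Fop_def by (rule sum.cong) (auto simp: assms(2) fadd_z[OF assms(1)])
  then show ?thesis by simp
qed



lemma principle:
  fixes \<Phi> :: "(nat \<Rightarrow> 'a::ab_group_add) \<Rightarrow> nat \<Rightarrow> 'b::ab_group_add"
  assumes ad: "addl \<Phi>" and shf: "\<And>X. \<Phi> (sh X) = sh (\<Phi> X)"
    and cs: "\<And>u q. q \<le> N \<Longrightarrow> \<Phi> (cst u) q = 0"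
  shows principle_low: "q \<le> N \<Longrightarrow> \<Phi> X q = 0"
    and principle_top: "\<Phi> X (Suc N) = \<Phi> (cst (X 0)) (Suc N)"
proof -
  have dec: "X = cst (X 0) + sh (\<lambda>k. X (Suc k))" for X :: "nat \<Rightarrow> 'a"
  proof (rule ext)
    fix n show "X n = (cst (X 0) + sh (\<lambda>k. X (Suc k))) n"
      by (cases n) (simp_all add: cst_def plus_fun_apply)
  qed
  have split: "\<And>X n. \<Phi> X n = \<Phi> (cst (X 0)) n + sh (\<Phi> (\<lambda>k. X (Suc k))) n"
  proof -
    fix X :: "nat \<Rightarrow> 'a" and n
    have "\<Phi> X = \<Phi> (cst (X 0) + sh (\<lambda>k. X (Suc k)))" using dec[of X] by simp
    also have "\<dots> = \<Phi> (cst (X 0)) + sh (\<Phi> (\<lambda>k. X (Suc k)))"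
      by (simp add: addl_add[OF ad] shf)
    finally show "\<Phi> X n = \<Phi> (cst (X 0)) n + sh (\<Phi> (\<lambda>k. X (Suc k))) n"
      by (simp add: plus_fun_apply)
  qed
  have low: "\<And>X. q \<le> N \<Longrightarrow> \<Phi> X q = 0" for q
  proof (induction q)
    case 0 then show ?case using split[of _ 0] cs[of 0] by simp
  next
    case (Suc q)
    then show ?case using split[of _ "Suc q"] cs[of "Suc q"] by simp
  qed
  show "q \<le> N \<Longrightarrow> \<Phi> X q = 0" by (rule low)
  show "\<Phi> X (Suc N) = \<Phi> (cst (X 0)) (Suc N)"
    using split[of X "Suc N"] low[of N] by simp
qed

lemma sh_add: "sh (U + V) = sh U + sh (V::nat \<Rightarrow> 'a::ab_group_add)"
  using addl_add[OF sh_addl] by blast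
lemma sh_diff: "sh (U - V) = sh U - sh (V::nat \<Rightarrow> 'a::ab_group_add)"
  using addl_diff[OF sh_addl] by blast

context
  fixes m :: "nat \<Rightarrow> 'v::ab_group_add \<Rightarrow> 'v \<Rightarrow> 'v"
  assumes bm: "biadd m"
begin

lemma Mop_add1: "Mop m (X + X') Y = Mop m X Y + Mop m X' Y"
  using addl_add[OF Mop_addl1[OF bm]] by blast
lemma Mop_diff1: "Mop m (X - X') Y = Mop m X Y - Mop m X' Y"
  using addl_diff[OF Mop_addl1[OF bm]] by blast
lemma Mop_add2: "Mop m X (Y + Y') = Mop m X Y + Mop m X Y'"
  using addl_add[OF Mop_addl2[OF bm]] by blast
lemma Mop_diff2: "Mop m X (Y - Y') = Mop m X Y - Mop m X Y'"
  using addl_diff[OF Mop_addl2[OF bm]] by blast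

end

definition A_of :: "(nat \<Rightarrow> 'v::ab_group_add \<Rightarrow> 'v \<Rightarrow> 'v) \<Rightarrow> (nat \<Rightarrow> 'v) \<Rightarrow> (nat \<Rightarrow> 'v) \<Rightarrow> (nat \<Rightarrow> 'v) \<Rightarrow> nat \<Rightarrow> 'v" where
  "A_of m X Y Z = Mop m (Mop m X Y) Z - Mop m X (Mop m Y Z + Mop m Z Y)"

lemma formal1:
  assumes bm: "biadd m"
  shows "zd3 (Mop m) (Mop m) (Mop m) (A_of m) X Y Z W = 0"
  unfolding zd3_def A_of_def
  by (simp add: Mop_add1[OF bm] Mop_diff1[OF bm] Mop_add2[OF bm] Mop_diff2[OF bm] algebra_simps)



context
  fixes m :: "nat \<Rightarrow> 'v::ab_group_add \<Rightarrow> 'v \<Rightarrow> 'v"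
  assumes bm: "biadd m"
begin

lemmas Mrules = Mop_add1[OF bm] Mop_diff1[OF bm] Mop_add2[OF bm] Mop_diff2[OF bm]
  Mop_sh1[OF bm] Mop_sh2[OF bm] sh_add sh_diff

lemma A_addl1: "addl (\<lambda>X. A_of m X Y Z)"
  unfolding addl_def A_of_def by (simp add: Mrules algebra_simps)
lemma A_addl2: "addl (\<lambda>Y. A_of m X Y Z)"
  unfolding addl_def A_of_def by (simp add: Mrules algebra_simps)
lemma A_addl3: "addl (\<lambda>Z. A_of m X Y Z)"
  unfolding addl_def A_of_def by (simp add: Mrules algebra_simps)
lemma A_sh1: "A_of m (sh X) Y Z = sh (A_of m X Y Z)"
  unfolding A_of_def by (simp add: Mrules)
lemma A_sh2: "A_of m X (sh Y) Z = sh (A_of m X Y Z)"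
  unfolding A_of_def by (simp add: Mrules)
lemma A_sh3: "A_of m X Y (sh Z) = sh (A_of m X Y Z)"
  unfolding A_of_def by (simp add: Mrules)

lemma A_cst: "A_of m (cst x) (cst y) (cst z) q =
   (\<Sum>l=0..q. m l (m (q - l) x y) z) - (\<Sum>l=0..q. m l x (m (q - l) y z + m (q - l) z y))"
  unfolding A_of_def by (simp add: Mop_cst_cst[OF bm] Mop_cstR[OF bm] Mop_cstL[OF bm] plus_fun_apply)

end

lemma biadd_ext:
  fixes m :: "nat \<Rightarrow> 'v::ab_group_add \<Rightarrow> 'w::ab_group_add \<Rightarrow> 'u::ab_group_add"
  assumes "\<And>i x. i \<le> N \<Longrightarrow> addl (m i x)" "\<And>i y. i \<le> N \<Longrightarrow> addl (\<lambda>x. m i x y)"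
  shows "biadd (\<lambda>i. if i \<le> N then m i else (\<lambda>_ _. 0))"
  using assms unfolding biadd_def addl_def by auto

lemma alg_cocycle:
  fixes m :: "nat \<Rightarrow> 'v::ab_group_add \<Rightarrow> 'v \<Rightarrow> 'v"
  assumes a1: "\<And>i x. i \<le> N \<Longrightarrow> addl (m i x)" and a2: "\<And>i y. i \<le> N \<Longrightarrow> addl (\<lambda>x. m i x y)"
    and dfm: "\<And>n x y z. n \<le> N \<Longrightarrow>
      (\<Sum>l=0..n. m l (m (n-l) x y) z) = (\<Sum>l=0..n. m l x (m (n-l) y z + m (n-l) z y))"
  shows "zd3 (m 0) (m 0) (m 0) (Ob_alg N m) x y z w = 0"
proof -
  define m' where "m' = (\<lambda>i. if i \<le> N then m i else (\<lambda>_ _. 0::'v))"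
  have bm: "biadd m'" unfolding m'_def by (rule biadd_ext[OF a1 a2])
  have m'0: "m' 0 = m 0" by (simp add: m'_def)
  have Alow: "A_of m' (cst u) (cst v) (cst t) q = 0" if "q \<le> N" for u v t q
  proof -
    have "(\<Sum>l=0..q. m' l (m' (q - l) u v) t) = (\<Sum>l=0..q. m l (m (q - l) u v) t)"
      using that by (intro sum.cong) (auto simp: m'_def)
    moreover have "(\<Sum>l=0..q. m' l u (m' (q - l) v t + m' (q - l) t v)) = (\<Sum>l=0..q. m l u (m (q - l) v t + m (q - l) t v))"
      using that by (intro sum.cong) (auto simp: m'_def)
    ultimately show ?thesis using A_cst[OF bm] dfm[OF that] by simp
  qed
  have Atop: "A_of m' (cst u) (cst v) (cst t) (Suc N) = Ob_alg N m u v t" for u v t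
  proof -
    have z1: "m 0 0 t = 0" using addl_0[OF a2[of 0]] by simp
    have z2: "m 0 u 0 = 0" using addl_0[OF a1[of 0]] by simp
    have "(\<Sum>l=0..Suc N. m' l (m' (Suc N - l) u v) t) = (\<Sum>l=1..N. m l (m (N + 1 - l) u v) t)"
    proof -
      have "(\<Sum>l=0..Suc N. m' l (m' (Suc N - l) u v) t) = m' 0 (m' (Suc N) u v) t + (\<Sum>l=Suc 0..Suc N. m' l (m' (Suc N - l) u v) t)"
        by (simp add: sum.atLeast_Suc_atMost)
      also have "(\<Sum>l=Suc 0..Suc N. m' l (m' (Suc N - l) u v) t) = (\<Sum>l=Suc 0..N. m' l (m' (Suc N - l) u v) t) + m' (Suc N) (m' 0 u v) t"
        by (simp add: sum.cl_ivl_Suc)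
      finally show ?thesis
        by (auto simp: m'_def z1 intro!: sum.cong)
    qed
    moreover have "(\<Sum>l=0..Suc N. m' l u (m' (Suc N - l) v t + m' (Suc N - l) t v)) = (\<Sum>l=1..N. m l u (m (N + 1 - l) v t + m (N + 1 - l) t v))"
    proof -
      have "(\<Sum>l=0..Suc N. m' l u (m' (Suc N - l) v t + m' (Suc N - l) t v)) = m' 0 u (m' (Suc N) v t + m' (Suc N) t v) + (\<Sum>l=Suc 0..Suc N. m' l u (m' (Suc N - l) v t + m' (Suc N - l) t v))"
        by (simp add: sum.atLeast_Suc_atMost)
      also have "(\<Sum>l=Suc 0..Suc N. m' l u (m' (Suc N - l) v t + m' (Suc N - l) t v)) = (\<Sum>l=Suc 0..N. m' l u (m' (Suc N - l) v t + m' (Suc N - l) t v)) + m' (Suc N) u (m' 0 v t + m' 0 t v)"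
        by (simp add: sum.cl_ivl_Suc)
      finally show ?thesis
        by (auto simp: m'_def z2 intro!: sum.cong)
    qed
    ultimately show ?thesis using A_cst[OF bm] by (simp add: Ob_alg_def)
  qed
  have P1: "A_of m' X (cst v) (cst t) (Suc N) = A_of m' (cst (X 0)) (cst v) (cst t) (Suc N)" for X v t
    by (rule principle_top[where \<Phi>="\<lambda>X. A_of m' X (cst v) (cst t)"])
      (fact A_addl1[OF bm], fact A_sh1[OF bm], simp add: Alow)
  have P2: "A_of m' (cst u) Y (cst t) (Suc N) = A_of m' (cst u) (cst (Y 0)) (cst t) (Suc N)" for Y u t
    by (rule principle_top[where \<Phi>="\<lambda>Y. A_of m' (cst u) Y (cst t)"])
      (fact A_addl2[OF bm], fact A_sh2[OF bm], simp add: Alow)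
  have P3: "A_of m' (cst u) (cst v) Z (Suc N) = A_of m' (cst u) (cst v) (cst (Z 0)) (Suc N)" for Z u v
    by (rule principle_top[where \<Phi>="\<lambda>Z. A_of m' (cst u) (cst v) Z"])
      (fact A_addl3[OF bm], fact A_sh3[OF bm], simp add: Alow)
  have c0: "cst u 0 = u" for u :: 'v by (simp add: cst_def)
  have M0: "Mop m' (cst u) (cst v) 0 = m 0 u v" for u v
    by (simp add: Mop_0 c0 m'0)
  have e1: "Mop m' (cst x) (A_of m' (cst y) (cst z) (cst w) - A_of m' (cst z) (cst w) (cst y)
      + A_of m' (cst z) (cst y) (cst w) - A_of m' (cst w) (cst z) (cst y)) (Suc N)
    = m 0 x (Ob_alg N m y z w - Ob_alg N m z w y + Ob_alg N m z y w - Ob_alg N m w z y)"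
    by (subst Mop_lowR[OF bm]) (auto simp: plus_fun_apply Alow Atop c0 m'0)
  have e2: "A_of m' (Mop m' (cst x) (cst y)) (cst z) (cst w) (Suc N) = Ob_alg N m (m 0 x y) z w"
    using P1[where X="Mop m' (cst x) (cst y)" and v=z and t=w] by (simp add: M0 Atop)
  have e3: "A_of m' (cst x) (Mop m' (cst y) (cst z) + Mop m' (cst z) (cst y)) (cst w) (Suc N)
      = Ob_alg N m x (m 0 y z + m 0 z y) w"
    using P2[where Y="Mop m' (cst y) (cst z) + Mop m' (cst z) (cst y)" and u=x and t=w] by (simp add: M0 Atop plus_fun_apply)
  have e4: "A_of m' (cst x) (cst y) (Mop m' (cst z) (cst w) + Mop m' (cst w) (cst z)) (Suc N)
      = Ob_alg N m x y (m 0 z w + m 0 w z)"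
    using P3[where Z="Mop m' (cst z) (cst w) + Mop m' (cst w) (cst z)" and u=x and v=y] by (simp add: M0 Atop plus_fun_apply)
  have e5: "Mop m' (A_of m' (cst x) (cst y) (cst z)) (cst w) (Suc N) = m 0 (Ob_alg N m x y z) w"
    by (subst Mop_lowL[OF bm]) (auto simp: Alow Atop c0 m'0)
  have "zd3 (Mop m') (Mop m') (Mop m') (A_of m') (cst x) (cst y) (cst z) (cst w) (Suc N) = 0"
    using formal1[OF bm] by simp
  then show ?thesis
    unfolding zd3_def plus_fun_apply minus_apply e1 e2 e3 e4 e5 .
qed



definition zext :: "nat \<Rightarrow> (nat \<Rightarrow> 'a \<Rightarrow> 'b \<Rightarrow> 'c::zero) \<Rightarrow> nat \<Rightarrow> 'a \<Rightarrow> 'b \<Rightarrow> 'c" where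
  "zext N m = (\<lambda>i. if i \<le> N then m i else (\<lambda>_ _. 0))"

definition zextf :: "nat \<Rightarrow> (nat \<Rightarrow> 'a \<Rightarrow> 'b::zero) \<Rightarrow> nat \<Rightarrow> 'a \<Rightarrow> 'b" where
  "zextf N f = (\<lambda>i. if i \<le> N then f i else (\<lambda>_. 0))"

lemma zext_le[simp]: "i \<le> N \<Longrightarrow> zext N m i = m i" by (simp add: zext_def)
lemma zext_gt[simp]: "\<not> i \<le> N \<Longrightarrow> zext N m i x y = 0" by (simp add: zext_def)
lemma zextf_le[simp]: "i \<le> N \<Longrightarrow> zextf N f i = f i" by (simp add: zextf_def)
lemma zextf_gt[simp]: "\<not> i \<le> N \<Longrightarrow> zextf N f i x = 0" by (simp add: zextf_def)

lemma biadd_zext: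
  assumes "\<And>i x. i \<le> N \<Longrightarrow> addl (m i x)" "\<And>i y. i \<le> N \<Longrightarrow> addl (\<lambda>x. m i x y)"
  shows "biadd (zext N m)"
  using assms unfolding biadd_def addl_def zext_def by auto

lemma fadd_zextf:
  assumes "\<And>i. i \<le> N \<Longrightarrow> addl (f i)"
  shows "fadd (zextf N f)"
  using assms unfolding fadd_def addl_def zextf_def by auto

locale alg_def =
  fixes m :: "nat \<Rightarrow> 'v::ab_group_add \<Rightarrow> 'v \<Rightarrow> 'v" and N :: nat
  assumes a1: "\<And>i x. i \<le> N \<Longrightarrow> addl (m i x)" and a2: "\<And>i y. i \<le> N \<Longrightarrow> addl (\<lambda>x. m i x y)"
    and dfm: "\<And>n x y z. n \<le> N \<Longrightarrow>
      (\<Sum>l=0..n. m l (m (n-l) x y) z) = (\<Sum>l=0..n. m l x (m (n-l) y z + m (n-l) z y))"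
begin

abbreviation "m' \<equiv> zext N m"

lemma bm: "biadd m'" by (rule biadd_zext[OF a1 a2])

lemma Alow: "A_of m' (cst u) (cst v) (cst t) q = 0" if "q \<le> N"
proof -
  have "(\<Sum>l=0..q. m' l (m' (q - l) u v) t) = (\<Sum>l=0..q. m l (m (q - l) u v) t)"
    using that by (intro sum.cong) auto
  moreover have "(\<Sum>l=0..q. m' l u (m' (q - l) v t + m' (q - l) t v)) = (\<Sum>l=0..q. m l u (m (q - l) v t + m (q - l) t v))"
    using that by (intro sum.cong) auto
  ultimately show ?thesis using A_cst[OF bm] dfm[OF that] by simp
qed

lemma Atop: "A_of m' (cst u) (cst v) (cst t) (Suc N) = Ob_alg N m u v t"
proof -
  have z1: "m 0 0 t = 0" using addl_0[OF a2[of 0]] by simp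
  have z2: "m 0 u 0 = 0" using addl_0[OF a1[of 0]] by simp
  have "(\<Sum>l=0..Suc N. m' l (m' (Suc N - l) u v) t) = (\<Sum>l=1..N. m l (m (N + 1 - l) u v) t)"
  proof -
    have "(\<Sum>l=0..Suc N. m' l (m' (Suc N - l) u v) t) = m' 0 (m' (Suc N) u v) t + (\<Sum>l=Suc 0..Suc N. m' l (m' (Suc N - l) u v) t)"
      by (simp add: sum.atLeast_Suc_atMost)
    also have "(\<Sum>l=Suc 0..Suc N. m' l (m' (Suc N - l) u v) t) = (\<Sum>l=Suc 0..N. m' l (m' (Suc N - l) u v) t) + m' (Suc N) (m' 0 u v) t"
      by (simp add: sum.cl_ivl_Suc)
    finally show ?thesis
      by (auto simp: z1 intro!: sum.cong)
  qed
  moreover have "(\<Sum>l=0..Suc N. m' l u (m' (Suc N - l) v t + m' (Suc N - l) t v)) = (\<Sum>l=1..N. m l u (m (N + 1 - l) v t + m (N + 1 - l) t v))"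
  proof -
    have "(\<Sum>l=0..Suc N. m' l u (m' (Suc N - l) v t + m' (Suc N - l) t v)) = m' 0 u (m' (Suc N) v t + m' (Suc N) t v) + (\<Sum>l=Suc 0..Suc N. m' l u (m' (Suc N - l) v t + m' (Suc N - l) t v))"
      by (simp add: sum.atLeast_Suc_atMost)
    also have "(\<Sum>l=Suc 0..Suc N. m' l u (m' (Suc N - l) v t + m' (Suc N - l) t v)) = (\<Sum>l=Suc 0..N. m' l u (m' (Suc N - l) v t + m' (Suc N - l) t v)) + m' (Suc N) u (m' 0 v t + m' 0 t v)"
      by (simp add: sum.cl_ivl_Suc)
    finally show ?thesis
      by (auto simp: z2 intro!: sum.cong)
  qed
  ultimately show ?thesis using A_cst[OF bm] by (simp add: Ob_alg_def)
qed

lemma L3: assumes "q \<le> N" shows "A_of m' (cst u) (cst v) Z q = 0"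
  by (rule principle_low[where \<Phi>="\<lambda>Z. A_of m' (cst u) (cst v) Z", OF _ _ _ assms])
     (fact A_addl3[OF bm], fact A_sh3[OF bm], simp add: Alow)

lemma T3: "A_of m' (cst u) (cst v) Z (Suc N) = A_of m' (cst u) (cst v) (cst (Z 0)) (Suc N)"
  by (rule principle_top[where \<Phi>="\<lambda>Z. A_of m' (cst u) (cst v) Z"])
     (fact A_addl3[OF bm], fact A_sh3[OF bm], simp add: Alow)

lemma L2: assumes "q \<le> N" shows "A_of m' (cst u) Y Z q = 0"
  by (rule principle_low[where \<Phi>="\<lambda>Y. A_of m' (cst u) Y Z", OF _ _ _ assms])
     (fact A_addl2[OF bm], fact A_sh2[OF bm], simp add: L3)

lemma T2: "A_of m' (cst u) Y Z (Suc N) = A_of m' (cst u) (cst (Y 0)) Z (Suc N)"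
  by (rule principle_top[where \<Phi>="\<lambda>Y. A_of m' (cst u) Y Z"])
     (fact A_addl2[OF bm], fact A_sh2[OF bm], simp add: L3)

lemma L1: assumes "q \<le> N" shows "A_of m' X Y Z q = 0"
  by (rule principle_low[where \<Phi>="\<lambda>X. A_of m' X Y Z", OF _ _ _ assms])
     (fact A_addl1[OF bm], fact A_sh1[OF bm], simp add: L2)

lemma T1: "A_of m' X Y Z (Suc N) = A_of m' (cst (X 0)) Y Z (Suc N)"
  by (rule principle_top[where \<Phi>="\<lambda>X. A_of m' X Y Z"])
     (fact A_addl1[OF bm], fact A_sh1[OF bm], simp add: L2)

lemma Afull: "A_of m' X Y Z (Suc N) = Ob_alg N m (X 0) (Y 0) (Z 0)"
  using T1[of X Y Z] T2[of "X 0" Y Z] T3[of "X 0" "Y 0" Z] Atop by simp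

end



context
  fixes f :: "nat \<Rightarrow> 'r::ab_group_add \<Rightarrow> 's::ab_group_add"
  assumes bf: "fadd f"
begin
lemma Fop_add: "Fop f (X + X') = Fop f X + Fop f X'"
  using addl_add[OF Fop_addl[OF bf]] by blast
lemma Fop_diff: "Fop f (X - X') = Fop f X - Fop f X'"
  using addl_diff[OF Fop_addl[OF bf]] by blast
end

definition E_of :: "(nat \<Rightarrow> 'r::ab_group_add \<Rightarrow> 'r \<Rightarrow> 'r) \<Rightarrow> (nat \<Rightarrow> 's::ab_group_add \<Rightarrow> 's \<Rightarrow> 's)
   \<Rightarrow> (nat \<Rightarrow> 'r \<Rightarrow> 's) \<Rightarrow> (nat \<Rightarrow> 'r) \<Rightarrow> (nat \<Rightarrow> 'r) \<Rightarrow> nat \<Rightarrow> 's" where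
  "E_of r s f X Y = Fop f (Mop r X Y) - Mop s (Fop f X) (Fop f Y)"

context
  fixes r :: "nat \<Rightarrow> 'r::ab_group_add \<Rightarrow> 'r \<Rightarrow> 'r" and s :: "nat \<Rightarrow> 's::ab_group_add \<Rightarrow> 's \<Rightarrow> 's"
    and f :: "nat \<Rightarrow> 'r \<Rightarrow> 's"
  assumes br: "biadd r" and bs: "biadd s" and bf: "fadd f"
begin

lemmas Erules = Mop_add1[OF br] Mop_diff1[OF br] Mop_add2[OF br] Mop_diff2[OF br]
  Mop_sh1[OF br] Mop_sh2[OF br]
  Mop_add1[OF bs] Mop_diff1[OF bs] Mop_add2[OF bs] Mop_diff2[OF bs]
  Mop_sh1[OF bs] Mop_sh2[OF bs] sh_add sh_diff
  Fop_add[OF bf] Fop_diff[OF bf] Fop_sh[OF bf]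

lemma formal2:
  "Fop f (A_of r X Y Z) - A_of s (Fop f X) (Fop f Y) (Fop f Z)
   + zd2 (Mop r) (\<lambda>a b. Mop s (Fop f a) b) (\<lambda>b a. Mop s b (Fop f a)) (E_of r s f) X Y Z = 0"
  unfolding zd2_def A_of_def E_of_def by (simp add: Erules algebra_simps)

lemma E_addl1: "addl (\<lambda>X. E_of r s f X Y)"
  unfolding addl_def E_of_def by (simp add: Erules algebra_simps)
lemma E_addl2: "addl (\<lambda>Y. E_of r s f X Y)"
  unfolding addl_def E_of_def by (simp add: Erules algebra_simps)
lemma E_sh1: "E_of r s f (sh X) Y = sh (E_of r s f X Y)"
  unfolding E_of_def by (simp add: Erules)
lemma E_sh2: "E_of r s f X (sh Y) = sh (E_of r s f X Y)"
  unfolding E_of_def by (simp add: Erules)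

lemma E_cst: "E_of r s f (cst u) (cst v) q =
  (\<Sum>l=0..q. f l (r (q - l) u v)) - (\<Sum>(a,b,c)\<in>S3 q. s a (f b u) (f c v))"
  unfolding E_of_def by (simp add: Mop_cst_cst[OF br] Fop_cst[OF bf] Fop_def Mop_def)

end



locale mor_def = R: alg_def r N + S: alg_def s N
  for r :: "nat \<Rightarrow> 'r::ab_group_add \<Rightarrow> 'r \<Rightarrow> 'r" and s :: "nat \<Rightarrow> 's::ab_group_add \<Rightarrow> 's \<Rightarrow> 's" and N +
  fixes f :: "nat \<Rightarrow> 'r \<Rightarrow> 's"
  assumes fa: "\<And>i. i \<le> N \<Longrightarrow> addl (f i)"
    and dff: "\<And>n x y. n \<le> N \<Longrightarrow> (\<Sum>i=0..n. f i (r (n-i) x y)) =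
               (\<Sum>(i,j,k)\<in>{(i,j,k). i + j + k = n}. s i (f j x) (f k y))"
begin

lemma bf: "fadd (zextf N f)" by (rule fadd_zextf[OF fa])

abbreviation "EE \<equiv> E_of (zext N r) (zext N s) (zextf N f)"

lemma Elow: "EE (cst u) (cst v) q = 0" if "q \<le> N"
proof -
  have "(\<Sum>l=0..q. zextf N f l (zext N r (q - l) u v)) = (\<Sum>l=0..q. f l (r (q - l) u v))"
    using that by (intro sum.cong) auto
  moreover have "(\<Sum>(a,b,c)\<in>S3 q. zext N s a (zextf N f b u) (zextf N f c v)) =
      (\<Sum>(a,b,c)\<in>S3 q. s a (f b u) (f c v))"
    using that by (intro sum.cong) (auto simp: S3_def)
  ultimately show ?thesis using E_cst[OF R.bm S.bm bf] dff[OF that] by (simp add: S3_def)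
qed

lemma Etop: "EE (cst u) (cst v) (Suc N) = - Ob_mor N r s f u v"
proof -
  have z1: "f 0 0 = 0" using addl_0[OF fa[of 0]] by simp
  have "(\<Sum>l=0..Suc N. zextf N f l (zext N r (Suc N - l) u v)) = (\<Sum>l=1..N. f l (r (N + 1 - l) u v))"
  proof -
    have "(\<Sum>l=0..Suc N. zextf N f l (zext N r (Suc N - l) u v)) = zextf N f 0 (zext N r (Suc N) u v) + (\<Sum>l=Suc 0..Suc N. zextf N f l (zext N r (Suc N - l) u v))"
      by (simp add: sum.atLeast_Suc_atMost)
    also have "(\<Sum>l=Suc 0..Suc N. zextf N f l (zext N r (Suc N - l) u v)) = (\<Sum>l=Suc 0..N. zextf N f l (zext N r (Suc N - l) u v)) + zextf N f (Suc N) (zext N r 0 u v)"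
      by (simp add: sum.cl_ivl_Suc)
    finally show ?thesis
      by (auto simp: z1 intro!: sum.cong)
  qed
  moreover have "(\<Sum>(a,b,c)\<in>S3 (Suc N). zext N s a (zextf N f b u) (zextf N f c v)) =
     (\<Sum>(i,j,k)\<in>{(i,j,k). i + j + k = N + 1 \<and> i \<le> N \<and> j \<le> N \<and> k \<le> N}. s i (f j u) (f k v))"
  proof (rule sum.mono_neutral_cong_right)
    show "finite (S3 (Suc N))" by (rule S3_finite)
    show "{(i,j,k). i + j + k = N + 1 \<and> i \<le> N \<and> j \<le> N \<and> k \<le> N} \<subseteq> S3 (Suc N)"
      by (auto simp: S3_def)
    show "\<forall>p\<in>S3 (Suc N) - {(i,j,k). i + j + k = N + 1 \<and> i \<le> N \<and> j \<le> N \<and> k \<le> N}.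
        (case p of (a,b,c) \<Rightarrow> zext N s a (zextf N f b u) (zextf N f c v)) = 0"
    proof
      fix p assume "p \<in> S3 (Suc N) - {(i,j,k). i + j + k = N + 1 \<and> i \<le> N \<and> j \<le> N \<and> k \<le> N}"
      then obtain a b c where p: "p = (a,b,c)" "a + b + c = Suc N" "\<not> (a \<le> N \<and> b \<le> N \<and> c \<le> N)"
        by (auto simp: S3_def)
      have z1: "zext N s a 0 w = 0" for w using biadd_z1[OF S.bm] by blast
      have z2: "zext N s a w 0 = 0" for w using biadd_z2[OF S.bm] by blast
      show "(case p of (a,b,c) \<Rightarrow> zext N s a (zextf N f b u) (zextf N f c v)) = 0"
        using p z1 z2 by (cases "a \<le> N"; cases "b \<le> N") auto
    qed
    show "\<And>p. p \<in> {(i,j,k). i + j + k = N + 1 \<and> i \<le> N \<and> j \<le> N \<and> k \<le> N} \<Longrightarrow>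
        (case p of (a,b,c) \<Rightarrow> zext N s a (zextf N f b u) (zextf N f c v)) = (case p of (i,j,k) \<Rightarrow> s i (f j u) (f k v))"
      by auto
  qed
  ultimately show ?thesis using E_cst[OF R.bm S.bm bf] by (simp add: Ob_mor_def)
qed

lemma EL2: assumes "q \<le> N" shows "EE (cst u) Y q = 0"
  by (rule principle_low[where \<Phi>="\<lambda>Y. EE (cst u) Y", OF _ _ _ assms])
     (fact E_addl2[OF R.bm S.bm bf], fact E_sh2[OF R.bm S.bm bf], simp add: Elow)

lemma ET2: "EE (cst u) Y (Suc N) = EE (cst u) (cst (Y 0)) (Suc N)"
  by (rule principle_top[where \<Phi>="\<lambda>Y. EE (cst u) Y"])
     (fact E_addl2[OF R.bm S.bm bf], fact E_sh2[OF R.bm S.bm bf], simp add: Elow)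

lemma EL1: assumes "q \<le> N" shows "EE X Y q = 0"
  by (rule principle_low[where \<Phi>="\<lambda>X. EE X Y", OF _ _ _ assms])
     (fact E_addl1[OF R.bm S.bm bf], fact E_sh1[OF R.bm S.bm bf], simp add: EL2)

lemma ET1: "EE X Y (Suc N) = EE (cst (X 0)) Y (Suc N)"
  by (rule principle_top[where \<Phi>="\<lambda>X. EE X Y"])
     (fact E_addl1[OF R.bm S.bm bf], fact E_sh1[OF R.bm S.bm bf], simp add: EL2)

lemma Efull: "EE X Y (Suc N) = - Ob_mor N r s f (X 0) (Y 0)"
  using ET1[of X Y] ET2[of "X 0" Y] Etop by simp

lemma mor_cocycle:
  "f 0 (Ob_alg N r x y z) - Ob_alg N s (f 0 x) (f 0 y) (f 0 z)
   - zd2 (r 0) (\<lambda>a b. s 0 (f 0 a) b) (\<lambda>b a. s 0 b (f 0 a)) (Ob_mor N r s f) x y z = 0"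
proof -
  let ?r = "zext N r" and ?s = "zext N s" and ?f = "zextf N f"
  have c0: "cst u 0 = u" for u :: "'a::zero" by (simp add: cst_def)
  have F0: "Fop ?f (cst u) 0 = f 0 u" for u by (simp add: Fop_0 c0)
  have M0: "Mop ?r (cst u) (cst v) 0 = r 0 u v" for u v by (simp add: Mop_0 c0)
  have h1: "Fop ?f (A_of ?r (cst x) (cst y) (cst z)) (Suc N) = f 0 (Ob_alg N r x y z)"
    by (subst Fop_low[OF bf]) (auto simp: R.L1 R.Afull c0)
  have h2: "A_of ?s (Fop ?f (cst x)) (Fop ?f (cst y)) (Fop ?f (cst z)) (Suc N) = Ob_alg N s (f 0 x) (f 0 y) (f 0 z)"
    by (simp add: S.Afull F0)
  have g1: "Mop ?s (Fop ?f (cst x)) (EE (cst y) (cst z) + EE (cst z) (cst y)) (Suc N)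
      = s 0 (f 0 x) (- Ob_mor N r s f y z + - Ob_mor N r s f z y)"
    by (subst Mop_lowR[OF S.bm]) (auto simp: plus_fun_apply EL1 Efull c0 F0)
  have g2: "EE (Mop ?r (cst x) (cst y)) (cst z) (Suc N) = - Ob_mor N r s f (r 0 x y) z"
    by (simp add: Efull M0 c0)
  have g3: "EE (cst x) (Mop ?r (cst y) (cst z) + Mop ?r (cst z) (cst y)) (Suc N)
      = - Ob_mor N r s f x (r 0 y z + r 0 z y)"
    by (simp add: Efull M0 c0 plus_fun_apply)
  have g4: "Mop ?s (EE (cst x) (cst y)) (Fop ?f (cst z)) (Suc N) = s 0 (- Ob_mor N r s f x y) (f 0 z)"
    by (subst Mop_lowL[OF S.bm]) (auto simp: EL1 Efull c0 F0)
  have "(Fop ?f (A_of ?r (cst x) (cst y) (cst z)) - A_of ?s (Fop ?f (cst x)) (Fop ?f (cst y)) (Fop ?f (cst z))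
   + zd2 (Mop ?r) (\<lambda>a b. Mop ?s (Fop ?f a) b) (\<lambda>b a. Mop ?s b (Fop ?f a)) EE (cst x) (cst y) (cst z)) (Suc N) = 0"
    using formal2[OF R.bm S.bm bf] by simp
  then have main: "f 0 (Ob_alg N r x y z) - Ob_alg N s (f 0 x) (f 0 y) (f 0 z)
     + (s 0 (f 0 x) (- Ob_mor N r s f y z + - Ob_mor N r s f z y) - - Ob_mor N r s f (r 0 x y) z
        + - Ob_mor N r s f x (r 0 y z + r 0 z y) - s 0 (- Ob_mor N r s f x y) (f 0 z)) = 0"
    unfolding zd2_def plus_fun_apply minus_apply h1 h2 g1 g2 g3 g4 .
  have s1: "s 0 a (b + c) = s 0 a b + s 0 a c" for a b c using addl_add[OF S.a1[of 0]] by simp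
  have s2: "s 0 a (- b) = - s 0 a b" for a b using addl_neg[OF S.a1[of 0]] by simp
  have s3: "s 0 (- a) b = - s 0 a b" for a b using addl_neg[OF S.a2[of 0]] by simp
  show ?thesis using main unfolding zd2_def s1 s2 s3 by (simp add: algebra_simps)
qed

end



theorem lemma5p1:
  fixes sR :: "'k::field \<Rightarrow> 'r::ab_group_add \<Rightarrow> 'r"
    and sS :: "'k \<Rightarrow> 's::ab_group_add \<Rightarrow> 's"
    and m_R :: "'r \<Rightarrow> 'r \<Rightarrow> 'r" and m_S :: "'s \<Rightarrow> 's \<Rightarrow> 's" and f :: "'r \<Rightarrow> 's"
    and N :: nat
    and mR :: "nat \<Rightarrow> 'r \<Rightarrow> 'r \<Rightarrow> 'r" and mS :: "nat \<Rightarrow> 's \<Rightarrow> 's \<Rightarrow> 's" and fs :: "nat \<Rightarrow> 'r \<Rightarrow> 's"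
  assumes "zinbiel_morphism sR m_R sS m_S f"
    and "N > 0"
    and "mR 0 = m_R" and "mS 0 = m_S" and "fs 0 = f"
    and "zinbiel_deformation sR sS N mR mS fs"
  shows "zd3_f m_R m_S f (Ob N mR mS fs) = (\<lambda>x y z w. 0, \<lambda>x y z w. 0, \<lambda>x y z. 0)"
proof -
  have D: "\<forall>i\<le>N. bilin sR sR (mR i) \<and> bilin sS sS (mS i) \<and> Vector_Spaces.linear sR sS (fs i)"
    and E: "\<forall>n\<le>N.
        (\<forall>x y z. (\<Sum>l=0..n. mR l (mR (n-l) x y) z) = (\<Sum>l=0..n. mR l x (mR (n-l) y z + mR (n-l) z y))) \<and>
        (\<forall>x y z. (\<Sum>l=0..n. mS l (mS (n-l) x y) z) = (\<Sum>l=0..n. mS l x (mS (n-l) y z + mS (n-l) z y))) \<and>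
        (\<forall>x y. (\<Sum>i=0..n. fs i (mR (n-i) x y)) =
               (\<Sum>(i,j,k)\<in>{(i,j,k). i + j + k = n}. mS i (fs j x) (fs k y)))"
    using assms(6) unfolding zinbiel_deformation_def by blast+
  have ra1: "\<And>i x. i \<le> N \<Longrightarrow> addl (mR i x)"
    using D unfolding bilin_def by (meson linear_addl)
  have ra2: "\<And>i y. i \<le> N \<Longrightarrow> addl (\<lambda>x. mR i x y)"
    using D unfolding bilin_def by (meson linear_addl)
  have sa1: "\<And>i x. i \<le> N \<Longrightarrow> addl (mS i x)"
    using D unfolding bilin_def by (meson linear_addl)
  have sa2: "\<And>i y. i \<le> N \<Longrightarrow> addl (\<lambda>x. mS i x y)"
    using D unfolding bilin_def by (meson linear_addl)
  have fa: "\<And>i. i \<le> N \<Longrightarrow> addl (fs i)"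
    using D by (meson linear_addl)
  have ER: "\<And>n x y z. n \<le> N \<Longrightarrow>
      (\<Sum>l=0..n. mR l (mR (n-l) x y) z) = (\<Sum>l=0..n. mR l x (mR (n-l) y z + mR (n-l) z y))"
    using E by blast
  have ES: "\<And>n x y z. n \<le> N \<Longrightarrow>
      (\<Sum>l=0..n. mS l (mS (n-l) x y) z) = (\<Sum>l=0..n. mS l x (mS (n-l) y z + mS (n-l) z y))"
    using E by blast
  have EF: "\<And>n x y. n \<le> N \<Longrightarrow> (\<Sum>i=0..n. fs i (mR (n-i) x y)) =
               (\<Sum>(i,j,k)\<in>{(i,j,k). i + j + k = n}. mS i (fs j x) (fs k y))"
    using E by blast
  interpret mor_def mR mS N fs
    by unfold_locales (fact ra1 ra2 ER sa1 sa2 ES fa EF)+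
  have c1: "zd3 (mR 0) (mR 0) (mR 0) (Ob_alg N mR) x y z w = 0" for x y z w
    by (rule alg_cocycle[OF ra1 ra2 ER])
  have c2: "zd3 (mS 0) (mS 0) (mS 0) (Ob_alg N mS) x y z w = 0" for x y z w
    by (rule alg_cocycle[OF sa1 sa2 ES])
  show ?thesis
    unfolding assms(3,4,5)[symmetric]
    by (simp add: zd3_f_def Ob_def fun_eq_iff c1 c2 mor_cocycle)
qed

end
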